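(* Let $A=(a_1\ a_2\ a_3)$ be a $1\times3$ matrix of pairwise distinct positive integers whose toric ideal $I_A$ is a complete intersection. Let $M=\{b,c\}$ be a minimal Markov basis for $A$ with $b=(b_1,-b_2,0)$ and $c=(c_1,c_2,-c_3)$, where $b_1,b_2,c_3>0$, $c_1,c_2\ge 0$ are integers and $b_1>b_2$. Then the following are equivalent: (1) $M$ is distance reducing; (2) $M$ reduces the distance of the circuit $z=\gamma(0,a_3,-a_2)$, where $\gamma=1/\gcd(a_2,a_3)$; (3) $c_1<c_2+c_3$.
   Context: For $z\in\mathbb Z^n$, $z^+,z^-\in\mathbb N^n$ denote the unique vectors with disjoint supports and $z=z^+-z^-$; $\|\cdot\|$ is the $1$-norm. The toric ideal is $I_A=\langle x^{u^+}-x^{u^-}:u\in\ker(A)\rangle$; it is a complete intersection if it is generated by $\dim\ker(A)$ elements. A Markov basis is a set $B\subseteq\ker(A)$ whose binomials $x^{u^+}-x^{u^-}$ generate $I_A$; minimal means no proper subset is a Markov basis. For nonzero $z\in\ker(A)$, $u\in\ker(A)$ reduces the distance of $z$ if there exist $(p,q)\in\{(z^+,z^-),(z^-,z^+)\}$ and $\varepsilon\in\{\pm1\}$ with $p+\varepsilon u\in\mathbb N^n$ and $\|p+\varepsilon u-q\|<\|z\|$. $B$ reduces the distance of $Z$ if each nonzero $z\in Z$ has its distance reduced by some element of $B$; $B$ is distance reducing if it reduces the distance of $\ker(A)$. *)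

theory Defs
  imports Main "HOL-Library.Poly_Mapping"
begin

(* Integer vectors in Z^n are represented as functions nat => int, only the
   coordinates 0..n-1 being relevant. An m x n integer matrix is a function
   nat => nat => int (row index, column index). *)

definition kerA :: "nat \<Rightarrow> nat \<Rightarrow> (nat \<Rightarrow> nat \<Rightarrow> int) \<Rightarrow> (nat \<Rightarrow> int) set" where
  "kerA m n A = {u. (\<forall>i\<ge>n. u i = 0) \<and> (\<forall>r<m. (\<Sum>j<n. A r j * u j) = 0)}"

definition posp :: "(nat \<Rightarrow> int) \<Rightarrow> nat \<Rightarrow> int" where
  "posp z = (\<lambda>i. max (z i) 0)"

definition negp :: "(nat \<Rightarrow> int) \<Rightarrow> nat \<Rightarrow> int" where
  "negp z = (\<lambda>i. max (- z i) 0)"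

definition norm1 :: "nat \<Rightarrow> (nat \<Rightarrow> int) \<Rightarrow> int" where
  "norm1 n z = (\<Sum>i<n. \<bar>z i\<bar>)"

type_synonym 'k mpoly = "(nat \<Rightarrow>\<^sub>0 nat) \<Rightarrow>\<^sub>0 'k"

definition expo :: "nat \<Rightarrow> (nat \<Rightarrow> int) \<Rightarrow> (nat \<Rightarrow>\<^sub>0 nat)" where
  "expo n v = (\<Sum>i<n. Poly_Mapping.single i (nat (v i)))"

definition xmon :: "nat \<Rightarrow> (nat \<Rightarrow> int) \<Rightarrow> 'k::field mpoly" where
  "xmon n v = Poly_Mapping.single (expo n v) 1"

definition binom :: "nat \<Rightarrow> (nat \<Rightarrow> int) \<Rightarrow> 'k::field mpoly" where
  "binom n u = xmon n (posp u) - xmon n (negp u)"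

definition ideal_gen :: "'a::comm_ring_1 set \<Rightarrow> 'a set" where
  "ideal_gen S = {x. \<exists>F c. finite F \<and> F \<subseteq> S \<and> x = (\<Sum>f\<in>F. c f * f)}"

definition toric_ideal :: "nat \<Rightarrow> nat \<Rightarrow> (nat \<Rightarrow> nat \<Rightarrow> int) \<Rightarrow> 'k::field mpoly set" where
  "toric_ideal m n A = ideal_gen (binom n ` kerA m n A)"

(* I_A is generated by d elements (d = dim ker A) *)
definition complete_intersection ::
  "'k::field itself \<Rightarrow> nat \<Rightarrow> nat \<Rightarrow> (nat \<Rightarrow> nat \<Rightarrow> int) \<Rightarrow> nat \<Rightarrow> bool" where
  "complete_intersection _ m n A d \<longleftrightarrow>
     (\<exists>gs :: 'k mpoly list. length gs = d \<and> ideal_gen (set gs) = toric_ideal m n A)"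

definition markov_basis ::
  "'k::field itself \<Rightarrow> nat \<Rightarrow> nat \<Rightarrow> (nat \<Rightarrow> nat \<Rightarrow> int) \<Rightarrow> (nat \<Rightarrow> int) set \<Rightarrow> bool" where
  "markov_basis _ m n A B \<longleftrightarrow> B \<subseteq> kerA m n A \<and>
     ideal_gen ((binom n :: _ \<Rightarrow> 'k mpoly) ` B) = toric_ideal m n A"

definition minimal_markov_basis ::
  "'k::field itself \<Rightarrow> nat \<Rightarrow> nat \<Rightarrow> (nat \<Rightarrow> nat \<Rightarrow> int) \<Rightarrow> (nat \<Rightarrow> int) set \<Rightarrow> bool" where
  "minimal_markov_basis K m n A B \<longleftrightarrow> markov_basis K m n A B \<and>
     (\<forall>B'. B' \<subset> B \<longrightarrow> \<not> markov_basis K m n A B')"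

definition reduces_dist :: "nat \<Rightarrow> (nat \<Rightarrow> int) \<Rightarrow> (nat \<Rightarrow> int) \<Rightarrow> bool" where
  "reduces_dist n u z \<longleftrightarrow>
     (\<exists>(p, q) \<in> {(posp z, negp z), (negp z, posp z)}. \<exists>\<epsilon> \<in> {1, -1::int}.
        (\<forall>i<n. 0 \<le> p i + \<epsilon> * u i) \<and>
        norm1 n (\<lambda>i. p i + \<epsilon> * u i - q i) < norm1 n z)"

definition reduces_dist_set :: "nat \<Rightarrow> (nat \<Rightarrow> int) set \<Rightarrow> (nat \<Rightarrow> int) set \<Rightarrow> bool" where
  "reduces_dist_set n B Z \<longleftrightarrow> (\<forall>z\<in>Z. z \<noteq> (\<lambda>_. 0) \<longrightarrow> (\<exists>u\<in>B. reduces_dist n u z))"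

definition distance_reducing ::
  "nat \<Rightarrow> nat \<Rightarrow> (nat \<Rightarrow> nat \<Rightarrow> int) \<Rightarrow> (nat \<Rightarrow> int) set \<Rightarrow> bool" where
  "distance_reducing m n A B \<longleftrightarrow> reduces_dist_set n B (kerA m n A)"

definition vec3 :: "int \<Rightarrow> int \<Rightarrow> int \<Rightarrow> nat \<Rightarrow> int" where
  "vec3 x y z = (\<lambda>i. if i = 0 then x else if i = 1 then y else if i = 2 then z else 0)"

end

theory Submission imports Defs begin

definition Sw :: "((nat \<Rightarrow>\<^sub>0 nat) \<Rightarrow> 'k::field) \<Rightarrow> 'k mpoly \<Rightarrow> 'k" where
  "Sw w P = Sum_any (\<lambda>m. Poly_Mapping.lookup P m * w m)"

lemma fin_sup: "finite {m. Poly_Mapping.lookup P m * w m \<noteq> (0::'k::field)}"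
  by (rule finite_subset[of _ "Poly_Mapping.keys P"]) (auto simp: in_keys_iff)

lemma Sw_add: "Sw w (P + Q) = Sw w P + Sw w Q"
  unfolding Sw_def lookup_add distrib_right
  by (rule Sum_any.distrib[OF fin_sup fin_sup])

lemma Sw_uminus: "Sw w (- P) = - Sw w P"
proof -
  have "Sw w (- P) + Sw w P = 0" using Sw_add[of w "-P" P] by (simp add: Sw_def)
  then show ?thesis by (simp add: eq_neg_iff_add_eq_0)
qed

lemma Sw_diff: "Sw w (P - Q) = Sw w P - Sw w Q"
  using Sw_add[of w P "-Q"] Sw_uminus[of w Q] by simp

lemma Sw_single: "Sw w (Poly_Mapping.single e a) = a * w e"
proof -
  have "(\<lambda>m. Poly_Mapping.lookup (Poly_Mapping.single e a) m * w m) = (\<lambda>m. if m = e then a * w m else 0)"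
    by (auto simp: lookup_single when_def)
  then show ?thesis unfolding Sw_def by (simp only:) (rule Sum_any.delta)
qed

lemma Sw_zero: "Sw w 0 = 0" by (simp add: Sw_def)

lemma Sw_sum: "finite F \<Longrightarrow> Sw w (\<Sum>f\<in>F. g f) = (\<Sum>f\<in>F. Sw w (g f))"
  by (induction F rule: finite_induct) (simp_all add: Sw_add Sw_zero)

lemma pm_expand: "(Q::'k::field mpoly) = (\<Sum>k\<in>Poly_Mapping.keys Q. Poly_Mapping.single k (Poly_Mapping.lookup Q k))"
proof (rule poly_mapping_eqI)
  fix m
  show "Poly_Mapping.lookup Q m = Poly_Mapping.lookup (\<Sum>k\<in>Poly_Mapping.keys Q. Poly_Mapping.single k (Poly_Mapping.lookup Q k)) m"
    unfolding lookup_sum lookup_single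
    by (cases "m \<in> Poly_Mapping.keys Q") (auto simp: when_def in_keys_iff)
qed

lemma Sw_mult_bin:
  assumes inv: "\<And>l. w (l + e1) = w (l + e2)"
  shows "Sw w (Q * (Poly_Mapping.single e1 1 - Poly_Mapping.single e2 1)) = 0"
proof -
  have "Q * (Poly_Mapping.single e1 1 - Poly_Mapping.single e2 1)
     = (\<Sum>k\<in>Poly_Mapping.keys Q. Poly_Mapping.single k (Poly_Mapping.lookup Q k) * (Poly_Mapping.single e1 1 - Poly_Mapping.single e2 1))"
    by (subst pm_expand[of Q]) (simp add: sum_distrib_right)
  also have "Sw w \<dots> = 0"
    by (simp add: Sw_sum right_diff_distrib mult_single Sw_diff Sw_single inv)
  finally show ?thesis .
qed

lemma ideal_gen_mem: "x \<in> S \<Longrightarrow> x \<in> ideal_gen S"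
  unfolding ideal_gen_def by (rule CollectI, rule exI[of _ "{x}"], rule exI[of _ "\<lambda>_. 1"]) auto

lemma lookup_expo: "Poly_Mapping.lookup (expo n v) i = (if i < n then nat (v i) else 0)"
  unfolding expo_def lookup_sum lookup_single by (auto simp: when_def)

definition inL :: "nat \<Rightarrow> (nat \<Rightarrow> int) \<Rightarrow> (nat \<Rightarrow> int) \<Rightarrow> (nat \<Rightarrow> int) \<Rightarrow> bool" where
  "inL n b c v \<longleftrightarrow> (\<exists>\<alpha> \<beta>. \<forall>i<n. v i = \<alpha> * b i + \<beta> * c i)"

lemma inL_shift:
  assumes "d \<in> {b, c}" "\<forall>i<n. v' i = v i + d i"
  shows "inL n b c v' \<longleftrightarrow> inL n b c v"
proof
  assume "inL n b c v'"
  then obtain \<alpha> \<beta> where h: "\<forall>i<n. v' i = \<alpha> * b i + \<beta> * c i" unfolding inL_def by blast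
  show "inL n b c v" unfolding inL_def
  proof (cases "d = b")
    case True
    then show "\<exists>\<alpha> \<beta>. \<forall>i<n. v i = \<alpha> * b i + \<beta> * c i" using h assms(2)
      by (intro exI[of _ "\<alpha> - 1"] exI[of _ \<beta>]) (auto simp: algebra_simps)
  next
    case False
    then have "d = c" using assms(1) by auto
    then show "\<exists>\<alpha> \<beta>. \<forall>i<n. v i = \<alpha> * b i + \<beta> * c i" using h assms(2)
      by (intro exI[of _ "\<alpha>"] exI[of _ "\<beta> - 1"]) (auto simp: algebra_simps)
  qed
next
  assume "inL n b c v"
  then obtain \<alpha> \<beta> where h: "\<forall>i<n. v i = \<alpha> * b i + \<beta> * c i" unfolding inL_def by blast
  show "inL n b c v'" unfolding inL_def
  proof (cases "d = b")
    case True
    then show "\<exists>\<alpha> \<beta>. \<forall>i<n. v' i = \<alpha> * b i + \<beta> * c i" using h assms(2)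
      by (intro exI[of _ "\<alpha> + 1"] exI[of _ \<beta>]) (auto simp: algebra_simps)
  next
    case False
    then have "d = c" using assms(1) by auto
    then show "\<exists>\<alpha> \<beta>. \<forall>i<n. v' i = \<alpha> * b i + \<beta> * c i" using h assms(2)
      by (intro exI[of _ "\<alpha>"] exI[of _ "\<beta> + 1"]) (auto simp: algebra_simps)
  qed
qed

lemma lattice:
  assumes mb: "markov_basis TYPE('k::field) m n A {b, c}" and u: "u \<in> kerA m n A"
  shows "inL n b c u"
proof -
  define m0 where "m0 = expo n (negp u)"
  define w :: "(nat \<Rightarrow>\<^sub>0 nat) \<Rightarrow> 'k" where
    "w l = (if inL n b c (\<lambda>i. int (Poly_Mapping.lookup l i) - int (Poly_Mapping.lookup m0 i)) then 1 else 0)" for l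
  have inv: "w (l + expo n (posp d)) = w (l + expo n (negp d))" if "d \<in> {b, c}" for l d
  proof -
    have "inL n b c (\<lambda>i. int (Poly_Mapping.lookup (l + expo n (posp d)) i) - int (Poly_Mapping.lookup m0 i))
      \<longleftrightarrow> inL n b c (\<lambda>i. int (Poly_Mapping.lookup (l + expo n (negp d)) i) - int (Poly_Mapping.lookup m0 i))"
      by (rule inL_shift[OF that]) (auto simp: lookup_add lookup_expo posp_def negp_def)
    then show ?thesis unfolding w_def by simp
  qed
  have "toric_ideal m n A = ideal_gen ((binom n :: _ \<Rightarrow> 'k mpoly) ` {b, c})"
    using mb unfolding markov_basis_def by simp
  moreover have "(binom n u :: 'k mpoly) \<in> toric_ideal m n A"
    unfolding toric_ideal_def using u by (intro ideal_gen_mem) auto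
  ultimately have "(binom n u :: 'k mpoly) \<in> ideal_gen ((binom n :: _ \<Rightarrow> 'k mpoly) ` {b, c})" by simp
  then obtain F cf where F: "finite F" "F \<subseteq> (binom n :: _ \<Rightarrow> 'k mpoly) ` {b, c}"
      and eq: "binom n u = (\<Sum>f\<in>F. cf f * f)"
    unfolding ideal_gen_def by blast
  have "Sw w (cf f * f) = 0" if "f \<in> F" for f
  proof -
    have "f \<in> (binom n :: _ \<Rightarrow> 'k mpoly) ` {b, c}" using F(2) that by (rule subsetD)
    then obtain d where d: "d \<in> {b, c}" "f = binom n d" by (rule imageE) simp
    show ?thesis unfolding d(2) binom_def xmon_def
      by (rule Sw_mult_bin) (rule inv[OF d(1)])
  qed
  then have "Sw w (binom n u) = 0" unfolding eq by (simp add: Sw_sum F(1))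
  then have "w (expo n (posp u)) - w m0 = 0"
    unfolding binom_def xmon_def Sw_diff Sw_single m0_def by simp
  moreover have "w m0 = 1"
  proof -
    have "inL n b c (\<lambda>i. int (Poly_Mapping.lookup m0 i) - int (Poly_Mapping.lookup m0 i))"
      unfolding inL_def by (rule exI[of _ 0], rule exI[of _ 0]) simp
    then show ?thesis unfolding w_def by simp
  qed
  ultimately have "w (expo n (posp u)) = 1" by simp
  then have "inL n b c (\<lambda>i. int (Poly_Mapping.lookup (expo n (posp u)) i) - int (Poly_Mapping.lookup m0 i))"
    unfolding w_def by (simp split: if_splits)
  moreover have "\<forall>i<n. int (Poly_Mapping.lookup (expo n (posp u)) i) - int (Poly_Mapping.lookup m0 i) = u i"
    by (auto simp: m0_def lookup_expo posp_def negp_def)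
  ultimately show ?thesis unfolding inL_def by simp
qed

lemma rd3: "reduces_dist 3 (vec3 w0 w1 w2) (vec3 x y t) \<longleftrightarrow>
  (\<exists>e\<in>{1,-1::int}.
    (0 \<le> max x 0 + e*w0 \<and> 0 \<le> max y 0 + e*w1 \<and> 0 \<le> max t 0 + e*w2 \<and>
     \<bar>max x 0 + e*w0 - max (-x) 0\<bar> + \<bar>max y 0 + e*w1 - max (-y) 0\<bar> + \<bar>max t 0 + e*w2 - max (-t) 0\<bar>
       < \<bar>x\<bar> + \<bar>y\<bar> + \<bar>t\<bar>) \<or>
    (0 \<le> max (-x) 0 + e*w0 \<and> 0 \<le> max (-y) 0 + e*w1 \<and> 0 \<le> max (-t) 0 + e*w2 \<and>
     \<bar>max (-x) 0 + e*w0 - max x 0\<bar> + \<bar>max (-y) 0 + e*w1 - max y 0\<bar> + \<bar>max (-t) 0 + e*w2 - max t 0\<bar>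
       < \<bar>x\<bar> + \<bar>y\<bar> + \<bar>t\<bar>))"
proof -
  have A: "(\<forall>i<(3::nat). P i) \<longleftrightarrow> P 0 \<and> P 1 \<and> P 2" for P
    by (auto simp: numeral_3_eq_3 less_Suc_eq numeral_2_eq_2)
  have S: "(\<Sum>i<(3::nat). f i) = f 0 + f 1 + f 2" for f :: "nat \<Rightarrow> int"
    by (simp add: numeral_3_eq_3 numeral_2_eq_2)
  show ?thesis
    unfolding reduces_dist_def norm1_def posp_def negp_def A S
    by (simp add: vec3_def) blast
qed


lemma vec3_eta: "(\<forall>i\<ge>3. u i = 0) \<Longrightarrow> u = vec3 (u 0) (u 1) (u 2)"
  by (rule ext) (auto simp: vec3_def numeral_3_eq_3 numeral_2_eq_2 not_less_eq)

lemma nc1: fixes x y t b1 b2 :: int assumes "x \<ge> b1" "t \<le> 0" "b1 > b2" "b2 > 0"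
 shows "0 \<le> max x 0 + - 1 * b1 \<and> 0 \<le> max y 0 + - 1 * - b2 \<and> 0 \<le> max t 0 + - 1 * 0 \<and>
     \<bar>max x 0 + - 1 * b1 - max (- x) 0\<bar> + \<bar>max y 0 + - 1 * - b2 - max (- y) 0\<bar> +
     \<bar>max t 0 + - 1 * 0 - max (- t) 0\<bar> < \<bar>x\<bar> + \<bar>y\<bar> + \<bar>t\<bar>"
proof -
  have e: "max x 0 = x" "max (-x) 0 = 0" "\<bar>x\<bar> = x" "max t 0 = 0" "max (-t) 0 = -t" "\<bar>t\<bar> = -t"
    using assms by auto
  show ?thesis unfolding e using assms by (cases "y \<ge> 0") (simp_all add: max_def)
qed

lemma nc2: fixes x y t c1 c2 c3 :: int assumes "y \<ge> c2" "t \<le> -c3" "c1 < c2 + c3" "c1 \<ge> 0" "c2 \<ge> 0" "c3 > 0"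
 shows "0 \<le> max (- x) 0 + 1 * c1 \<and> 0 \<le> max (- y) 0 + 1 * c2 \<and> 0 \<le> max (- t) 0 + 1 * - c3 \<and>
     \<bar>max (- x) 0 + 1 * c1 - max x 0\<bar> + \<bar>max (- y) 0 + 1 * c2 - max y 0\<bar> +
     \<bar>max (- t) 0 + 1 * - c3 - max t 0\<bar> < \<bar>x\<bar> + \<bar>y\<bar> + \<bar>t\<bar>"
proof -
  have e: "max y 0 = y" "max (-y) 0 = 0" "\<bar>y\<bar> = y" "max t 0 = 0" "max (-t) 0 = -t" "\<bar>t\<bar> = -t"
    using assms by auto
  show ?thesis unfolding e using assms by (cases "x \<ge> 0") (simp_all add: max_def)
qed

lemma nc3: fixes x y t b1 b2 :: int assumes "x \<le> -b1" "t \<ge> 0" "b1 > b2" "b2 > 0"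
 shows "0 \<le> max (- x) 0 + - 1 * b1 \<and> 0 \<le> max (- y) 0 + - 1 * - b2 \<and> 0 \<le> max (- t) 0 + - 1 * 0 \<and>
     \<bar>max (- x) 0 + - 1 * b1 - max x 0\<bar> + \<bar>max (- y) 0 + - 1 * - b2 - max y 0\<bar> +
     \<bar>max (- t) 0 + - 1 * 0 - max t 0\<bar> < \<bar>x\<bar> + \<bar>y\<bar> + \<bar>t\<bar>"
proof -
  have e: "max x 0 = 0" "max (-x) 0 = -x" "\<bar>x\<bar> = -x" "max t 0 = t" "max (-t) 0 = 0" "\<bar>t\<bar> = t"
    using assms by auto
  show ?thesis unfolding e using assms by (cases "y \<ge> 0") (simp_all add: max_def)
qed

lemma nc4: fixes x y t c1 c2 c3 :: int assumes "y \<le> -c2" "t \<ge> c3" "c1 < c2 + c3" "c1 \<ge> 0" "c2 \<ge> 0" "c3 > 0"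
 shows "0 \<le> max x 0 + 1 * c1 \<and> 0 \<le> max y 0 + 1 * c2 \<and> 0 \<le> max t 0 + 1 * - c3 \<and>
     \<bar>max x 0 + 1 * c1 - max (- x) 0\<bar> + \<bar>max y 0 + 1 * c2 - max (- y) 0\<bar> +
     \<bar>max t 0 + 1 * - c3 - max (- t) 0\<bar> < \<bar>x\<bar> + \<bar>y\<bar> + \<bar>t\<bar>"
proof -
  have e: "max y 0 = 0" "max (-y) 0 = -y" "\<bar>y\<bar> = -y" "max t 0 = t" "max (-t) 0 = 0" "\<bar>t\<bar> = t"
    using assms by auto
  show ?thesis unfolding e using assms by (cases "x \<ge> 0") (simp_all add: max_def)
qed

lemma red_main:
  fixes \<alpha> \<beta> b1 b2 c1 c2 c3 :: int
  assumes "b1 > b2" "b2 > 0" "c3 > 0" "c1 \<ge> 0" "c2 \<ge> 0" "c1 < c2 + c3"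
    and "\<alpha> \<noteq> 0 \<or> \<beta> \<noteq> 0"
    and x_def: "x = \<alpha>*b1 + \<beta>*c1" and y_def: "y = -\<alpha>*b2 + \<beta>*c2" and t_def: "t = -\<beta>*c3"
  shows "reduces_dist 3 (vec3 b1 (- b2) 0) (vec3 x y t)
       \<or> reduces_dist 3 (vec3 c1 c2 (- c3)) (vec3 x y t)"
proof -
  have "\<alpha> \<ge> 1 \<and> \<beta> \<ge> 0 \<or> \<alpha> \<le> 0 \<and> \<beta> \<ge> 1 \<or> \<alpha> \<le> -1 \<and> \<beta> \<le> 0 \<or> \<alpha> \<ge> 0 \<and> \<beta> \<le> -1"
    using assms(7) by linarith
  then show ?thesis
  proof (elim disjE conjE)
    assume h: "\<alpha> \<ge> 1" "\<beta> \<ge> 0"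
    have "\<alpha>*b1 \<ge> b1" using h assms by (simp add: mult_right_mono[of 1 \<alpha> b1, simplified])
    moreover have "\<beta>*c1 \<ge> 0" "\<beta>*c3 \<ge> 0" using h assms by simp_all
    ultimately have f: "x \<ge> b1" "t \<le> 0" unfolding x_def t_def by linarith+
    show ?thesis unfolding rd3
      by (rule disjI1, rule bexI[where x="-1"], rule disjI1, rule nc1[OF f assms(1,2)], simp)
  next
    assume h: "\<alpha> \<le> 0" "\<beta> \<ge> 1"
    have "\<beta>*c2 \<ge> c2" using h assms by (simp add: mult_right_mono[of 1 \<beta> c2, simplified])
    moreover have "-\<alpha>*b2 \<ge> 0" using h assms by (simp add: mult_nonpos_nonneg)
    moreover have "\<beta>*c3 \<ge> c3" using h assms by (simp add: mult_right_mono[of 1 \<beta> c3, simplified])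
    ultimately have f: "y \<ge> c2" "t \<le> -c3" unfolding y_def t_def by linarith+
    show ?thesis unfolding rd3
      by (rule disjI2, rule bexI[where x="1"], rule disjI2, rule nc2[OF f assms(6,4,5,3)], simp)
  next
    assume h: "\<alpha> \<le> -1" "\<beta> \<le> 0"
    have "\<alpha>*b1 \<le> -b1" using h assms by (simp add: mult_right_mono[of \<alpha> "-1" b1, simplified])
    moreover have "\<beta>*c1 \<le> 0" "\<beta>*c3 \<le> 0" using h assms by (simp_all add: mult_nonpos_nonneg)
    ultimately have f: "x \<le> -b1" "t \<ge> 0" unfolding x_def t_def by linarith+
    show ?thesis unfolding rd3
      by (rule disjI1, rule bexI[where x="-1"], rule disjI2, rule nc3[OF f assms(1,2)], simp)
  next
    assume h: "\<alpha> \<ge> 0" "\<beta> \<le> -1"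
    have "\<beta>*c2 \<le> -c2" using h assms by (simp add: mult_right_mono[of \<beta> "-1" c2, simplified])
    moreover have "-\<alpha>*b2 \<le> 0" using h assms by simp
    moreover have "\<beta>*c3 \<le> -c3" using h assms by (simp add: mult_right_mono[of \<beta> "-1" c3, simplified])
    ultimately have f: "y \<le> -c2" "t \<ge> c3" unfolding y_def t_def by linarith+
    show ?thesis unfolding rd3
      by (rule disjI2, rule bexI[where x="1"], rule disjI1, rule nc4[OF f assms(6,4,5,3)], simp)
  qed
qed


lemma zB:
  fixes Z2 Z3 b1 b2 :: int
  assumes "Z2 \<ge> 0" "Z3 > 0" "b1 > b2" "b2 > 0"
  shows "\<not> reduces_dist 3 (vec3 b1 (- b2) 0) (vec3 0 Z2 (- Z3))"
proof -
  have e: "max (0::int) 0 = 0" "max Z2 0 = Z2" "max (-Z2) 0 = 0" "max (-Z3) 0 = 0" "max (-(-Z3)) 0 = Z3"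
    "\<bar>0::int\<bar> = 0" "\<bar>Z2\<bar> = Z2" "\<bar>-Z3\<bar> = Z3" "- (0::int) = 0"
    using assms by auto
  show ?thesis unfolding rd3 e using assms by (auto simp: abs_if)
qed

lemma zC:
  fixes Z2 Z3 c1 c2 c3 :: int
  assumes "Z2 \<ge> c2" "Z3 \<ge> c3" "c1 \<ge> 0" "c2 \<ge> 0" "c3 > 0"
    and "reduces_dist 3 (vec3 c1 c2 (- c3)) (vec3 0 Z2 (- Z3))"
  shows "c1 < c2 + c3"
proof -
  have e: "max (0::int) 0 = 0" "max Z2 0 = Z2" "max (-Z2) 0 = 0" "max (-Z3) 0 = 0" "max (-(-Z3)) 0 = Z3"
    "\<bar>0::int\<bar> = 0" "\<bar>Z2\<bar> = Z2" "\<bar>-Z3\<bar> = Z3" "- (0::int) = 0"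
    using assms by auto
  show ?thesis using assms(6) unfolding rd3 e using assms(1-5) by (auto simp: abs_if split: if_splits)
qed

theorem theorem3p5:
  fixes a1 a2 a3 b1 b2 c1 c2 c3 :: int
  assumes "a1 > 0" "a2 > 0" "a3 > 0"
    and "a1 \<noteq> a2" "a1 \<noteq> a3" "a2 \<noteq> a3"
    and "complete_intersection TYPE('k::field) 1 3 (\<lambda>_. vec3 a1 a2 a3) 2"
    and "b1 > 0" "b2 > 0" "c3 > 0" "c1 \<ge> 0" "c2 \<ge> 0" "b1 > b2"
    and "minimal_markov_basis TYPE('k) 1 3 (\<lambda>_. vec3 a1 a2 a3)
           {vec3 b1 (- b2) 0, vec3 c1 c2 (- c3)}"
  shows "(distance_reducing 1 3 (\<lambda>_. vec3 a1 a2 a3) {vec3 b1 (- b2) 0, vec3 c1 c2 (- c3)}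
          \<longleftrightarrow> reduces_dist_set 3 {vec3 b1 (- b2) 0, vec3 c1 c2 (- c3)}
                {vec3 0 (a3 div gcd a2 a3) (- (a2 div gcd a2 a3))})
       \<and> (reduces_dist_set 3 {vec3 b1 (- b2) 0, vec3 c1 c2 (- c3)}
                {vec3 0 (a3 div gcd a2 a3) (- (a2 div gcd a2 a3))}
          \<longleftrightarrow> c1 < c2 + c3)"
proof -
  define B where "B = vec3 b1 (- b2) 0"
  define C where "C = vec3 c1 c2 (- c3)"
  define A :: "nat \<Rightarrow> nat \<Rightarrow> int" where "A = (\<lambda>_. vec3 a1 a2 a3)"
  have mb: "markov_basis TYPE('k) 1 3 A {B, C}"
    using assms(14) unfolding minimal_markov_basis_def A_def B_def C_def by simp
  have lat: "\<exists>\<alpha> \<beta>. u 0 = \<alpha>*b1 + \<beta>*c1 \<and> u 1 = -\<alpha>*b2 + \<beta>*c2 \<and> u 2 = -\<beta>*c3"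
    if uk: "u \<in> kerA 1 3 A" for u
  proof -
    obtain \<alpha> \<beta> where h: "\<forall>i<3. u i = \<alpha> * B i + \<beta> * C i"
      using lattice[OF mb uk] unfolding inL_def by blast
    show ?thesis using h[rule_format, of 0] h[rule_format, of 1] h[rule_format, of 2]
      by (intro exI[of _ \<alpha>] exI[of _ \<beta>]) (simp add: B_def C_def vec3_def)
  qed
  have P31: "distance_reducing 1 3 A {B, C}" if c: "c1 < c2 + c3"
    unfolding distance_reducing_def reduces_dist_set_def
  proof (intro ballI impI)
    fix u assume u: "u \<in> kerA 1 3 A" and nz: "u \<noteq> (\<lambda>_. 0)"
    obtain \<alpha> \<beta> where ab: "u 0 = \<alpha>*b1 + \<beta>*c1" "u 1 = -\<alpha>*b2 + \<beta>*c2" "u 2 = -\<beta>*c3"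
      using lat[OF u] by blast
    have ueq: "u = vec3 (u 0) (u 1) (u 2)"
      using u unfolding kerA_def by (intro vec3_eta) simp
    have "\<alpha> \<noteq> 0 \<or> \<beta> \<noteq> 0"
    proof (rule ccontr)
      assume "\<not> (\<alpha> \<noteq> 0 \<or> \<beta> \<noteq> 0)"
      then have "u 0 = 0" "u 1 = 0" "u 2 = 0" using ab by simp_all
      then have "u = (\<lambda>_. 0)" by (subst ueq) (auto simp: vec3_def)
      then show False using nz by simp
    qed
    from red_main[OF assms(13,9,10,11,12) c this ab]
    have "reduces_dist 3 B u \<or> reduces_dist 3 C u"
      unfolding B_def C_def by (subst (1 2) ueq)
    then show "\<exists>w\<in>{B, C}. reduces_dist 3 w u" by blast
  qed
  define g where "g = gcd a2 a3"
  define Z2 where "Z2 = a3 div g"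
  define Z3 where "Z3 = a2 div g"
  define z where "z = vec3 0 Z2 (- Z3)"
  have gpos: "g > 0" unfolding g_def using assms(2) by simp
  obtain m k where mk: "a2 = g * m" "a3 = g * k" unfolding g_def
    by (meson dvd_def gcd_dvd1 gcd_dvd2)
  have Z: "Z2 = k" "Z3 = m" unfolding Z2_def Z3_def mk using gpos by simp_all
  have Z3pos: "Z3 > 0" using mk(1) assms(2) gpos Z by (simp add: zero_less_mult_iff)
  have Z2pos: "Z2 > 0" using mk(2) assms(3) gpos Z by (simp add: zero_less_mult_iff)
  have zker: "z \<in> kerA 1 3 A"
    unfolding kerA_def z_def A_def
    by (auto simp: vec3_def numeral_3_eq_3 Z mk)
  have znz: "z \<noteq> (\<lambda>_. 0)"
  proof
    assume "z = (\<lambda>_. 0)"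
    then have "z 2 = 0" by simp
    then show False using Z3pos by (simp add: z_def vec3_def)
  qed
  have P12: "reduces_dist_set 3 {B, C} {z}" if "distance_reducing 1 3 A {B, C}"
  proof -
    have "\<forall>z\<in>kerA 1 3 A. z \<noteq> (\<lambda>_. 0) \<longrightarrow> (\<exists>w\<in>{B, C}. reduces_dist 3 w z)"
      using that unfolding distance_reducing_def reduces_dist_set_def by assumption
    from bspec[OF this zker] show ?thesis unfolding reduces_dist_set_def by simp
  qed
  have P23: "c1 < c2 + c3" if "reduces_dist_set 3 {B, C} {z}"
  proof -
    have "z \<noteq> (\<lambda>_. 0) \<longrightarrow> (\<exists>w\<in>{B, C}. reduces_dist 3 w z)"
      using that unfolding reduces_dist_set_def by simp
    then obtain w where w: "w \<in> {B, C}" "reduces_dist 3 w z"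
      using znz by blast
    obtain \<alpha> \<beta> where ab: "z 0 = \<alpha>*b1 + \<beta>*c1" "z 1 = -\<alpha>*b2 + \<beta>*c2" "z 2 = -\<beta>*c3"
      using lat[OF zker] by blast
    have ab': "0 = \<alpha>*b1 + \<beta>*c1" "Z2 = -\<alpha>*b2 + \<beta>*c2" "Z3 = \<beta>*c3"
      using ab by (simp_all add: z_def vec3_def)
    have "\<beta> > 0" using ab'(3) Z3pos assms(10) by (simp add: zero_less_mult_iff)
    then have b1: "\<beta> \<ge> 1" by simp
    have "\<beta>*c1 \<ge> 0" using b1 assms(11) by simp
    then have "\<alpha>*b1 \<le> 0" using ab'(1) by linarith
    then have "\<alpha> \<le> 0" using assms(8) by (simp add: mult_le_0_iff)
    then have "-\<alpha>*b2 \<ge> 0" using assms(9) by (simp add: mult_nonpos_nonneg)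
    moreover have "\<beta>*c2 \<ge> c2" using b1 assms(12) by (simp add: mult_right_mono[of 1 \<beta> c2, simplified])
    moreover have "\<beta>*c3 \<ge> c3" using b1 assms(10) by (simp add: mult_right_mono[of 1 \<beta> c3, simplified])
    ultimately have f: "Z2 \<ge> c2" "Z3 \<ge> c3" using ab' by linarith+
    show ?thesis
    proof (cases "w = B")
      case True
      have "\<not> reduces_dist 3 B z" unfolding B_def z_def
        by (rule zB) (use Z2pos Z3pos assms(13,9) in auto)
      then show ?thesis using w(2) True by simp
    next
      case False
      then have "w = C" using w(1) by simp
      then show ?thesis using zC[OF f assms(11,12,10)] w(2) unfolding C_def z_def by simp
    qed
  qed
  have zdef': "vec3 0 (a3 div gcd a2 a3) (- (a2 div gcd a2 a3)) = z"
    unfolding z_def Z2_def Z3_def g_def ..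
  show ?thesis
    unfolding zdef' A_def[symmetric] B_def[symmetric] C_def[symmetric]
  proof (intro conjI iffI)
    assume "distance_reducing 1 3 A {B, C}" then show "reduces_dist_set 3 {B, C} {z}" by (rule P12)
  next
    assume "reduces_dist_set 3 {B, C} {z}" then show "distance_reducing 1 3 A {B, C}" by (intro P31 P23)
  next
    assume "reduces_dist_set 3 {B, C} {z}" then show "c1 < c2 + c3" by (rule P23)
  next
    assume "c1 < c2 + c3" then show "reduces_dist_set 3 {B, C} {z}" by (intro P12 P31)
  qed
qed

end
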